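(* For every $\lambda\in\Lambda^{\bullet}(n,r)$, the map $\mathrm{ro}:\mathrm{cb}(\lambda)\to\Lambda(n,r)_{\preceq\lambda}$, $A\mapsto\mathrm{ro}(A)$, is a bijection.
   Context: Let $n,r\ge 0$. $\Lambda(n,r)$ is the set of weak compositions $(\lambda_1,\dots,\lambda_n)$ of $r$ into $n$ nonnegative parts. $\Lambda^{\bullet}(n,r)$ is the set of $\lambda\in\Lambda(n,r)$ such that $\lambda_i=0$ implies $\lambda_j=0$ for all $j>i$. For an $n\times n$ matrix $A$, $\mathrm{ro}(A)$ and $\mathrm{co}(A)$ denote its row-sum and column-sum vectors. A column block diagonal matrix is a matrix $A=(a_{i,j})$ with nonnegative integer entries such that $a_{i,j}>0$ implies $a_{i',s}=0$ for all $i'\le i$ and $s>j$. $\mathrm{cb}(\lambda)$ is the set of $n\times n$ column block diagonal matrices $A$ with $\mathrm{co}(A)=\lambda$. For $\mu,\lambda\in\Lambda(n,r)$, $\mu$ is a refinement of $\lambda$, written $\mu\preceq\lambda$, if $\mu$ is obtained by subdividing the parts of $\lambda$ in order. Precisely, if $\lambda=(\lambda_1,\dots,\lambda_t,0,\dots,0)$ with $\lambda_1,\dots,\lambda_t>0$, then there are indices $1=i_1<i_2<\dots<i_{t+1}=n+1$ with $\lambda_k=\mu_{i_k}+\dots+\mu_{i_{k+1}-1}$ for $1\le k\le t$. $\Lambda(n,r)_{\preceq\lambda}=\{\mu\in\Lambda(n,r):\mu\preceq\lambda\}$. *)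

theory Defs
  imports Main
begin

text \<open>Conventions: indices are 0-based, i.e. the paper's index i corresponds to i-1 here.
  A vector of length n is a function nat => nat that vanishes outside {0..<n};
  an n x n matrix with nonnegative integer entries is a function nat => nat => nat
  that vanishes outside {0..<n} x {0..<n}.\<close>

definition vec_of :: "nat \<Rightarrow> (nat \<Rightarrow> nat) \<Rightarrow> bool" where
  "vec_of n v \<longleftrightarrow> (\<forall>i. n \<le> i \<longrightarrow> v i = 0)"

definition mat_of :: "nat \<Rightarrow> (nat \<Rightarrow> nat \<Rightarrow> nat) \<Rightarrow> bool" where
  "mat_of n A \<longleftrightarrow> (\<forall>i j. (n \<le> i \<or> n \<le> j) \<longrightarrow> A i j = 0)"

definition Lam :: "nat \<Rightarrow> nat \<Rightarrow> (nat \<Rightarrow> nat) set" where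
  "Lam n r = {v. vec_of n v \<and> (\<Sum>i<n. v i) = r}"

definition Lam_bullet :: "nat \<Rightarrow> nat \<Rightarrow> (nat \<Rightarrow> nat) set" where
  "Lam_bullet n r = {v \<in> Lam n r. \<forall>i j. i < j \<and> j < n \<and> v i = 0 \<longrightarrow> v j = 0}"

definition ro :: "nat \<Rightarrow> (nat \<Rightarrow> nat \<Rightarrow> nat) \<Rightarrow> nat \<Rightarrow> nat" where
  "ro n A = (\<lambda>i. \<Sum>j<n. A i j)"

definition co :: "nat \<Rightarrow> (nat \<Rightarrow> nat \<Rightarrow> nat) \<Rightarrow> nat \<Rightarrow> nat" where
  "co n A = (\<lambda>j. \<Sum>i<n. A i j)"

definition col_block_diag :: "nat \<Rightarrow> (nat \<Rightarrow> nat \<Rightarrow> nat) \<Rightarrow> bool" where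
  "col_block_diag n A \<longleftrightarrow> mat_of n A \<and>
     (\<forall>i<n. \<forall>j<n. 0 < A i j \<longrightarrow> (\<forall>i'\<le>i. \<forall>s. j < s \<and> s < n \<longrightarrow> A i' s = 0))"

definition cb :: "nat \<Rightarrow> (nat \<Rightarrow> nat) \<Rightarrow> (nat \<Rightarrow> nat \<Rightarrow> nat) set" where
  "cb n lam = {A. col_block_diag n A \<and> co n A = lam}"

definition refines :: "nat \<Rightarrow> (nat \<Rightarrow> nat) \<Rightarrow> (nat \<Rightarrow> nat) \<Rightarrow> bool" where
  "refines n mu lam \<longleftrightarrow>
     ((\<forall>k<n. lam k = 0) \<and> (\<forall>i<n. mu i = 0)) \<or>
     (\<exists>t idx. 0 < t \<and> t \<le> n \<and> (\<forall>k<t. 0 < lam k) \<and> (\<forall>k. t \<le> k \<and> k < n \<longrightarrow> lam k = 0) \<and>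
        idx 0 = 0 \<and> idx t = n \<and> (\<forall>k<t. idx k < idx (Suc k)) \<and>
        (\<forall>k<t. lam k = (\<Sum>i\<in>{idx k..<idx (Suc k)}. mu i)))"

definition Lam_refining :: "nat \<Rightarrow> nat \<Rightarrow> (nat \<Rightarrow> nat) \<Rightarrow> (nat \<Rightarrow> nat) set" where
  "Lam_refining n r lam = {mu \<in> Lam n r. refines n mu lam}"

end

theory Submission imports Defs begin
lemma pos_lt: "mat_of n A \<Longrightarrow> 0 < A i j \<Longrightarrow> i < n \<and> j < n"
  unfolding mat_of_def by (metis less_irrefl not_le)

lemma cbR:
  assumes "col_block_diag n A" "0 < A i j" "0 < A i' j'" "j < j'"
  shows "i < i'"
proof (rule ccontr)
  assume "\<not> i < i'"
  have m: "mat_of n A" using assms(1) unfolding col_block_diag_def by blast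
  have "i < n" "j < n" "j' < n" using pos_lt[OF m assms(2)] pos_lt[OF m assms(3)] by auto
  then have "A i' j' = 0" using assms(1,2,4) \<open>\<not> i < i'\<close> unfolding col_block_diag_def
    by (meson not_less)
  then show False using assms(3) by simp
qed

lemma cb_single:
  assumes "col_block_diag n A" "0 < A i j" "0 < A i j'"
  shows "j = j'"
  using cbR[OF assms(1,2,3)] cbR[OF assms(1,3,2)] by (meson less_irrefl linorder_neqE_nat)


lemma ro_single:
  assumes "col_block_diag n A" "0 < A i j"
  shows "ro n A i = A i j"
proof -
  have m: "mat_of n A" using assms(1) unfolding col_block_diag_def by blast
  have "j < n" using pos_lt[OF m assms(2)] by auto
  have "ro n A i = (\<Sum>j'<n. if j' = j then A i j else 0)"
    unfolding ro_def
  proof (rule sum.cong)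
    fix j' assume "j' \<in> {..<n}"
    show "A i j' = (if j' = j then A i j else 0)"
      using cb_single[OF assms(1,2), of j'] by (cases "A i j' = 0") auto
  qed simp
  also have "\<dots> = A i j" using \<open>j < n\<close> by simp
  finally show ?thesis .
qed

lemma entry_le_co: "i < n \<Longrightarrow> A i j \<le> co n A j"
  unfolding co_def by (rule member_le_sum) auto

lemma idx_mono:
  assumes "\<forall>k<t. idx k < (idx (Suc k) :: nat)" "a < b" "b \<le> t"
  shows "idx a < idx b"
  using assms(2,3)
proof (induction b)
  case 0 then show ?case by simp
next
  case (Suc b)
  have "idx b < idx (Suc b)" using assms(1) Suc.prems by auto
  then show ?case using Suc by (cases "a = b") auto
qed

lemma idx_le:
  assumes "\<forall>k<t. idx k < (idx (Suc k) :: nat)" "a \<le> b" "b \<le> t"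
  shows "idx a \<le> idx b"
  using idx_mono[OF assms(1), of a b] assms(2,3) by (cases "a = b") auto

lemma idx_unique:
  assumes "\<forall>k<t. idx k < (idx (Suc k) :: nat)" "j < t" "k < t"
    "idx j \<le> i" "i < idx (Suc j)" "idx k \<le> i" "i < idx (Suc k)"
  shows "j = k"
proof (rule ccontr)
  assume "j \<noteq> k"
  then consider "j < k" | "k < j" by linarith
  then show False
  proof cases
    case 1
    then have "idx (Suc j) \<le> idx k" using idx_le[OF assms(1), of "Suc j" k] assms by auto
    then show False using assms by linarith
  next
    case 2
    then have "idx (Suc k) \<le> idx j" using idx_le[OF assms(1), of "Suc k" j] assms by auto
    then show False using assms by linarith
  qed
qed

lemma idx_find:
  assumes "\<forall>k<t. idx k < (idx (Suc k) :: nat)" "idx 0 \<le> i" "i < idx t"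
  shows "\<exists>j<t. idx j \<le> i \<and> i < idx (Suc j)"
  using assms
proof (induction t)
  case 0 then show ?case by simp
next
  case (Suc t)
  show ?case
  proof (cases "i < idx t")
    case True
    then obtain j where "j < t" "idx j \<le> i" "i < idx (Suc j)" using Suc by auto
    then show ?thesis by (intro exI[of _ j]) auto
  next
    case False
    then show ?thesis using Suc.prems by (intro exI[of _ t]) auto
  qed
qed

lemma pos_case:
  assumes A: "A \<in> cb n lam" and pos: "0 < A i j"
  shows "(\<Sum>k<j. lam k) \<le> (\<Sum>i'<i. ro n A i') \<and> (\<Sum>i'<i. ro n A i') < (\<Sum>k<Suc j. lam k)"
proof -
  have cbd: "col_block_diag n A" and co: "co n A = lam" using A unfolding cb_def by auto
  have m: "mat_of n A" using cbd unfolding col_block_diag_def by blast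
  have "i < n" "j < n" using pos_lt[OF m pos] by auto
  have S: "(\<Sum>i'<i. ro n A i') = (\<Sum>j'<n. \<Sum>i'<i. A i' j')"
    unfolding ro_def by (rule sum.swap)
  have low: "(\<Sum>i'<i. A i' j') = lam j'" if "j' < j" for j'
  proof -
    have "lam j' = (\<Sum>i'<n. A i' j')" using co unfolding co_def by metis
    also have "\<dots> = (\<Sum>i'<i. A i' j')"
    proof (rule sum.mono_neutral_right)
      show "{..<i} \<subseteq> {..<n}" using \<open>i < n\<close> by auto
      show "\<forall>x\<in>{..<n} - {..<i}. A x j' = 0"
      proof
        fix x assume "x \<in> {..<n} - {..<i}"
        then have "\<not> x < i" by auto
        then show "A x j' = 0" using cbR[OF cbd _ pos that, of x] by auto
      qed
    qed simp
    finally show ?thesis by simp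
  qed
  have high: "(\<Sum>i'<i. A i' j') = 0" if "j < j'" "j' < n" for j'
  proof -
    have "A i' j' = 0" if "i' < i" for i'
      using cbd \<open>i < n\<close> \<open>j < n\<close> pos that \<open>j < j'\<close> \<open>j' < n\<close>
      unfolding col_block_diag_def by (meson less_imp_le)
    then show ?thesis by simp
  qed
  have Lj: "(\<Sum>k<j. lam k) = (\<Sum>j'<j. \<Sum>i'<i. A i' j')"
    using low by simp
  have "(\<Sum>j'<j. \<Sum>i'<i. A i' j') \<le> (\<Sum>j'<n. \<Sum>i'<i. A i' j')"
    by (rule sum_mono2) (use \<open>j < n\<close> in auto)
  then have part1: "(\<Sum>k<j. lam k) \<le> (\<Sum>i'<i. ro n A i')" using Lj S by simp
  have "(\<Sum>j'<n. \<Sum>i'<i. A i' j') = (\<Sum>j'<Suc j. \<Sum>i'<i. A i' j')"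
  proof (rule sum.mono_neutral_left[symmetric])
    show "{..<Suc j} \<subseteq> {..<n}" using \<open>j < n\<close> by auto
    show "\<forall>x\<in>{..<n} - {..<Suc j}. (\<Sum>i'<i. A i' x) = 0" using high by auto
  qed simp
  also have "\<dots> = (\<Sum>k<j. lam k) + (\<Sum>i'<i. A i' j)" using Lj by simp
  finally have S2: "(\<Sum>i'<i. ro n A i') = (\<Sum>k<j. lam k) + (\<Sum>i'<i. A i' j)" using S by simp
  have "(\<Sum>i'<i. A i' j) < (\<Sum>i'<Suc i. A i' j)" using pos by simp
  also have "\<dots> \<le> (\<Sum>i'<n. A i' j)" by (rule sum_mono2) (use \<open>i < n\<close> in auto)
  also have "\<dots> = lam j" using co unfolding co_def by metis
  finally have "(\<Sum>i'<i. A i' j) < lam j" .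
  then show ?thesis using part1 S2 by simp
qed

lemma char:
  assumes A: "A \<in> cb n lam" and "i < n" "j < n"
  shows "A i j = (if 0 < ro n A i \<and> (\<Sum>k<j. lam k) \<le> (\<Sum>i'<i. ro n A i') \<and>
                     (\<Sum>i'<i. ro n A i') < (\<Sum>k<Suc j. lam k) then ro n A i else 0)"
proof -
  have cbd: "col_block_diag n A" using A unfolding cb_def by auto
  have Lmono: "(\<Sum>k<a. lam k) \<le> (\<Sum>k<b. lam k)" if "a \<le> b" for a b :: nat
    by (rule sum_mono2) (use that in auto)
  show ?thesis
  proof (cases "0 < A i j")
    case True
    then show ?thesis using pos_case[OF A True] ro_single[OF cbd True] by auto
  next
    case False
    then have z: "A i j = 0" by simp
    have "\<not> ((\<Sum>k<j. lam k) \<le> (\<Sum>i'<i. ro n A i') \<and> (\<Sum>i'<i. ro n A i') < (\<Sum>k<Suc j. lam k))"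
      if "0 < ro n A i"
    proof
      assume H: "(\<Sum>k<j. lam k) \<le> (\<Sum>i'<i. ro n A i') \<and> (\<Sum>i'<i. ro n A i') < (\<Sum>k<Suc j. lam k)"
      from that obtain j' where "0 < A i j'" unfolding ro_def
        by (metis gr0I sum.neutral)
      note P = pos_case[OF A this]
      have "j \<noteq> j'" using z \<open>0 < A i j'\<close> by auto
      then consider "Suc j \<le> j'" | "Suc j' \<le> j" by linarith
      then show False
      proof cases
        case 1 then show False using Lmono[OF 1] H P by linarith
      next
        case 2 then show False using Lmono[OF 2] H P by linarith
      qed
    qed
    then show ?thesis using z by auto
  qed
qed

lemma inj_ro: "inj_on (ro n) (cb n lam)"
proof (rule inj_onI)
  fix A B assume A: "A \<in> cb n lam" and B: "B \<in> cb n lam" and e: "ro n A = ro n B"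
  have mA: "mat_of n A" and mB: "mat_of n B" using A B unfolding cb_def col_block_diag_def by auto
  show "A = B"
  proof (intro ext)
    fix i j
    show "A i j = B i j"
    proof (cases "i < n \<and> j < n")
      case True
      then show ?thesis using char[OF A, of i j] char[OF B, of i j] e by simp
    next
      case False
      then show ?thesis using mA mB unfolding mat_of_def by auto
    qed
  qed
qed


lemma surj_part:
  assumes lamB: "lam \<in> Lam_bullet n r" and mu: "mu \<in> Lam_refining n r lam"
  shows "\<exists>A\<in>cb n lam. ro n A = mu"
proof -
  have vl: "vec_of n lam" using lamB unfolding Lam_bullet_def Lam_def by auto
  have vm: "vec_of n mu" and rf: "refines n mu lam" using mu unfolding Lam_refining_def Lam_def by auto
  from rf consider (zero) "(\<forall>k<n. lam k = 0) \<and> (\<forall>i<n. mu i = 0)"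
    | (pos) t idx where "0 < t" "t \<le> n" "\<forall>k<t. 0 < lam k" "\<forall>k. t \<le> k \<and> k < n \<longrightarrow> lam k = 0"
        "idx 0 = 0" "idx t = n" "\<forall>k<t. idx k < idx (Suc k)"
        "\<forall>k<t. lam k = (\<Sum>i\<in>{idx k..<idx (Suc k)}. mu i)"
    unfolding refines_def by blast
  then show ?thesis
  proof cases
    case zero
    have l0: "lam = (\<lambda>_. 0)"
    proof
      fix k show "lam k = 0" using zero vl unfolding vec_of_def by (cases "k < n") auto
    qed
    have m0: "mu = (\<lambda>_. 0)"
    proof
      fix k show "mu k = 0" using zero vm unfolding vec_of_def by (cases "k < n") auto
    qed
    have "(\<lambda>i j. 0::nat) \<in> cb n lam"
      unfolding cb_def col_block_diag_def mat_of_def co_def l0 by auto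
    moreover have "ro n (\<lambda>i j. 0) = mu" unfolding ro_def m0 by simp
    ultimately show ?thesis by blast
  next
    case pos
    note inc = pos(7)
    define A where "A = (\<lambda>i j. if j < t \<and> idx j \<le> i \<and> i < idx (Suc j) then mu i else 0)"
    have idxn: "idx (Suc j) \<le> n" if "j < t" for j
      using idx_le[OF inc, of "Suc j" t] that pos(6) by auto
    have mat: "mat_of n A"
      unfolding mat_of_def A_def
    proof (intro allI impI)
      fix i j assume "n \<le> i \<or> n \<le> j"
      then show "(if j < t \<and> idx j \<le> i \<and> i < idx (Suc j) then mu i else 0) = 0"
        proof (cases "j < t")
        case True
        then show ?thesis using idxn[OF True] pos(2) \<open>n \<le> i \<or> n \<le> j\<close> by auto
      qed simp
    qed
    have cbd: "col_block_diag n A"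
      unfolding col_block_diag_def
    proof (intro conjI mat allI impI ballI)
      fix i j i' s assume H: "i < n" "j < n" "0 < A i j" "i' \<le> i" "j < s \<and> s < n"
      then have j: "j < t" "idx j \<le> i" "i < idx (Suc j)" unfolding A_def by (auto split: if_splits)
      show "A i' s = 0"
      proof (rule ccontr)
        assume "A i' s \<noteq> 0"
        then have "s < t" "idx s \<le> i'" unfolding A_def by (auto split: if_splits)
        moreover have "idx (Suc j) \<le> idx s" using idx_le[OF inc, of "Suc j" s] H \<open>s < t\<close> by auto
        ultimately show False using j H by linarith
      qed
    qed
    have co: "co n A = lam"
    proof
      fix j
      show "co n A j = lam j"
      proof (cases "j < t")
        case True
        have "co n A j = (\<Sum>i<n. if i \<in> {idx j..<idx (Suc j)} then mu i else 0)"
          unfolding co_def A_def using True by (intro sum.cong) auto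
        also have "\<dots> = (\<Sum>i\<in>{..<n} \<inter> {idx j..<idx (Suc j)}. mu i)"
          by (rule sum.inter_restrict[symmetric]) simp
        also have "{..<n} \<inter> {idx j..<idx (Suc j)} = {idx j..<idx (Suc j)}"
          using idxn[OF True] by auto
        finally show ?thesis using pos(8) True by simp
      next
        case False
        then have "co n A j = 0" unfolding co_def A_def by simp
        moreover have "lam j = 0" using False pos(4) vl unfolding vec_of_def by (cases "j < n") auto
        ultimately show ?thesis by simp
      qed
    qed
    have ro: "ro n A = mu"
    proof
      fix i
      show "ro n A i = mu i"
      proof (cases "i < n")
        case True
        obtain j0 where j0: "j0 < t" "idx j0 \<le> i" "i < idx (Suc j0)"
          using idx_find[OF inc, of i] True pos(5,6) by auto
        have "ro n A i = (\<Sum>j<n. if j = j0 then mu i else 0)"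
          unfolding ro_def
        proof (rule sum.cong)
          fix j assume "j \<in> {..<n}"
          show "A i j = (if j = j0 then mu i else 0)"
          proof (cases "j = j0")
            case True then show ?thesis using j0 unfolding A_def by simp
          next
            case False
            then have "\<not> (j < t \<and> idx j \<le> i \<and> i < idx (Suc j))"
              using idx_unique[OF inc, of j j0 i] j0 by blast
            then show ?thesis using False unfolding A_def by auto
          qed
        qed simp
        also have "\<dots> = mu i" using j0 pos(2) by simp
        finally show ?thesis .
      next
        case False
        have "A i j = 0" for j using mat False unfolding mat_of_def by (meson not_le)
        then have "ro n A i = 0" unfolding ro_def by simp
        moreover have "mu i = 0" using False vm unfolding vec_of_def by simp
        ultimately show ?thesis by simp
      qed
    qed
    show ?thesis using cbd co ro unfolding cb_def by blast
  qed
qed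


lemma get_t:
  assumes lamB: "lam \<in> Lam_bullet n r" and "0 < n" "0 < lam 0"
  shows "\<exists>t. 0 < t \<and> t \<le> n \<and> (\<forall>k<t. 0 < lam k) \<and> (\<forall>k. t \<le> k \<and> k < n \<longrightarrow> lam k = 0)"
proof (cases "\<exists>k<n. lam k = 0")
  case True
  define t where "t = (LEAST k. k < n \<and> lam k = 0)"
  obtain k0 where "k0 < n \<and> lam k0 = 0" using True by blast
  then have t1: "t < n \<and> lam t = 0" unfolding t_def by (rule LeastI)
  have t2: "0 < lam k" if "k < t" for k
  proof -
    have "\<not> (k < n \<and> lam k = 0)"
      using not_less_Least[of k "\<lambda>k. k < n \<and> lam k = 0"] that unfolding t_def by simp
    moreover have "k < n" using that t1 by simp
    ultimately show ?thesis by simp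
  qed
  have t3: "lam k = 0" if "t \<le> k" "k < n" for k
  proof (cases "t = k")
    case True then show ?thesis using t1 by simp
  next
    case False
    then have "t < k" using that by simp
    have bl: "\<forall>i j. i < j \<and> j < n \<and> lam i = 0 \<longrightarrow> lam j = 0"
      using lamB unfolding Lam_bullet_def mem_Collect_eq by (rule conjunct2)
    show ?thesis using bl[rule_format, of t k] \<open>t < k\<close> t1 that by simp
  qed
  have "t \<noteq> 0"
  proof
    assume "t = 0" then show False using t1 assms(3) by simp
  qed
  then have "0 < t" by simp
  moreover have "t \<le> n" using t1 by simp
  ultimately show ?thesis using t2 t3 by blast
next
  case False
  then have "\<forall>k<n. 0 < lam k" by simp
  then have "0 < n \<and> n \<le> n \<and> (\<forall>k<n. 0 < lam k) \<and> (\<forall>k. n \<le> k \<and> k < n \<longrightarrow> lam k = 0)"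
    using assms(2) by simp
  then show ?thesis by (rule exI)
qed

lemma col_nonzero:
  assumes "co n A k = lam k" "0 < lam k"
  shows "\<exists>i<n. 0 < A i k"
proof (rule ccontr)
  assume "\<not> ?thesis"
  then have "co n A k = 0" unfolding co_def by simp
  then show False using assms by simp
qed

lemma image_part:
  assumes lamB: "lam \<in> Lam_bullet n r" and A: "A \<in> cb n lam"
  shows "ro n A \<in> Lam_refining n r lam"
proof -
  have vl: "vec_of n lam" and sl: "(\<Sum>i<n. lam i) = r" using lamB unfolding Lam_bullet_def Lam_def by auto
  have cbd: "col_block_diag n A" and co: "co n A = lam" using A unfolding cb_def by auto
  have m: "mat_of n A" using cbd unfolding col_block_diag_def by blast
  have le_lam: "A i j \<le> lam j" if "i < n" for i j using entry_le_co[OF that, of A j] co by simp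
  have vec: "vec_of n (ro n A)"
    unfolding vec_of_def ro_def
  proof (intro allI impI)
    fix i assume "n \<le> i"
    then have "A i j = 0" for j using m unfolding mat_of_def by blast
    then show "(\<Sum>j<n. A i j) = 0" by simp
  qed
  have sum: "(\<Sum>i<n. ro n A i) = r"
  proof -
    have "(\<Sum>i<n. ro n A i) = (\<Sum>j<n. co n A j)" unfolding ro_def co_def by (rule sum.swap)
    then show ?thesis using co sl by simp
  qed
  have "refines n (ro n A) lam"
  proof (cases "0 < n \<and> 0 < lam 0")
    case False
    have lz: "lam k = 0" if "k < n" for k
    proof (cases "k = 0")
      case True then show ?thesis using False that by auto
    next
      case False
      have "lam 0 = 0" using \<open>\<not> (0 < n \<and> 0 < lam 0)\<close> that by auto
      then show ?thesis using lamB that False unfolding Lam_bullet_def by auto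
    qed
    have "A i j = 0" if "i < n" for i j
    proof (cases "j < n")
      case True then show ?thesis using le_lam[OF that, of j] lz[OF True] by simp
    next
      case False then show ?thesis using m unfolding mat_of_def by simp
    qed
    then have "ro n A i = 0" if "i < n" for i unfolding ro_def using that by simp
    then show ?thesis unfolding refines_def using lz by blast
  next
    case True
    obtain t where t: "0 < t" "t \<le> n" "\<forall>k<t. 0 < lam k" "\<forall>k. t \<le> k \<and> k < n \<longrightarrow> lam k = 0"
      using get_t[OF lamB conjunct1[OF True] conjunct2[OF True]] by (elim exE conjE) simp
    define P where "P = (\<lambda>k i. \<exists>j. k \<le> j \<and> j < n \<and> 0 < A i j)"
    define idx where "idx = (\<lambda>k. if k = 0 then 0 else if k < t then (LEAST i. P k i) else n)"
    have colnz: "\<exists>i<n. 0 < A i k" if "k < t" for k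
      using col_nonzero[of n A k lam] co t(3) that by simp
    have Pk: "P k (idx k) \<and> idx k < n \<and> (\<forall>i. P k i \<longrightarrow> idx k \<le> i)" if kk: "0 < k" "k < t" for k
    proof -
      obtain i0 where i0: "i0 < n" "0 < A i0 k" using colnz[OF kk(2)] by blast
      have "k < n" using kk t(2) by simp
      then have P0: "P k i0" unfolding P_def using i0 by blast
      have e: "idx k = (LEAST i. P k i)" unfolding idx_def using kk by simp
      have "P k (idx k)" unfolding e by (rule LeastI[of "P k", OF P0])
      moreover have "\<forall>i. P k i \<longrightarrow> idx k \<le> i" unfolding e by (auto intro: Least_le)
      moreover have "idx k \<le> i0" using calculation(2) P0 by blast
      ultimately show ?thesis using i0 by simp
    qed
    have idxle: "idx k \<le> n" for k
      using Pk[of k] unfolding idx_def by (cases "k = 0"; cases "k < t") auto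
    have a: "i < idx k" if "0 < k" "k < t" "0 < A i j" "j < k" for i j k
    proof -
      from Pk[OF that(1,2)] obtain j' where "k \<le> j'" "0 < A (idx k) j'" unfolding P_def by blast
      then show ?thesis using cbR[OF cbd that(3), of "idx k" j'] that(4) by simp
    qed
    have inA: "j < t" if "0 < A i j" for i j
    proof (rule ccontr)
      assume "\<not> j < t"
      have "i < n" "j < n" using pos_lt[OF m that] by auto
      then have "lam j = 0" using t(4) \<open>\<not> j < t\<close> by simp
      then show False using le_lam[OF \<open>i < n\<close>, of j] that by simp
    qed
    have b: "idx k \<le> i \<and> i < idx (Suc k)" if "k < t" "0 < A i k" for i k
    proof
      have "i < n" "k < n" using pos_lt[OF m that(2)] by auto
      show "idx k \<le> i"
      proof (cases "k = 0")
        case True then show ?thesis unfolding idx_def by simp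
      next
        case False
        then have "P k i" unfolding P_def using that \<open>k < n\<close> by blast
        then show ?thesis using Pk[of k] False that(1) by blast
      qed
      show "i < idx (Suc k)"
      proof (cases "Suc k < t")
        case True then show ?thesis using a[OF _ True that(2)] by simp
      next
        case False then show ?thesis unfolding idx_def using \<open>i < n\<close> by simp
      qed
    qed
    have inc: "\<forall>k<t. idx k < idx (Suc k)"
    proof (intro allI impI)
      fix k assume "k < t"
      obtain i0 where "i0 < n" "0 < A i0 k" using colnz[OF \<open>k < t\<close>] by blast
      then have "idx k \<le> i0 \<and> i0 < idx (Suc k)" using b[OF \<open>k < t\<close>] by blast
      then show "idx k < idx (Suc k)" by linarith
    qed
    have blocks: "lam k = (\<Sum>i\<in>{idx k..<idx (Suc k)}. ro n A i)" if "k < t" for k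
    proof -
      have "lam k = (\<Sum>i<n. A i k)" using co unfolding co_def by metis
      also have "\<dots> = (\<Sum>i\<in>{idx k..<idx (Suc k)}. A i k)"
      proof (rule sum.mono_neutral_right)
        show "{idx k..<idx (Suc k)} \<subseteq> {..<n}" using idxle[of "Suc k"] by auto
        show "\<forall>i\<in>{..<n} - {idx k..<idx (Suc k)}. A i k = 0"
          using b[OF that] by (meson DiffD2 atLeastLessThan_iff not_gr0)
      qed simp
      also have "\<dots> = (\<Sum>i\<in>{idx k..<idx (Suc k)}. ro n A i)"
      proof (rule sum.cong)
        fix i assume i: "i \<in> {idx k..<idx (Suc k)}"
        show "A i k = ro n A i"
        proof (cases "0 < A i k")
          case True then show ?thesis using ro_single[OF cbd True] by simp
        next
          case False
          have "ro n A i = 0"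
          proof (rule ccontr)
            assume "ro n A i \<noteq> 0"
            then obtain j where j: "0 < A i j" unfolding ro_def by (metis gr0I sum.neutral)
            have "j < t" using inA[OF j] .
            have "j = k" using idx_unique[OF inc \<open>j < t\<close> that, of i] b[OF \<open>j < t\<close> j] i by simp
            then show False using j False by simp
          qed
          then show ?thesis using False by simp
        qed
      qed simp
      finally show ?thesis .
    qed
    have "idx 0 = 0" "idx t = n" unfolding idx_def using t(1) by auto
    then show ?thesis unfolding refines_def using t inc blocks
      by (intro disjI2 exI[of _ t] exI[of _ idx]) auto
  qed
  then show ?thesis unfolding Lam_refining_def Lam_def using vec sum by simp
qed

theorem mainTheorem2:
  fixes n r :: nat and lam :: "nat \<Rightarrow> nat"
  assumes "lam \<in> Lam_bullet n r"
  shows "bij_betw (ro n) (cb n lam) (Lam_refining n r lam)"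
  unfolding bij_betw_def
proof
  show "inj_on (ro n) (cb n lam)" by (rule inj_ro)
  show "ro n ` cb n lam = Lam_refining n r lam"
  proof
    show "ro n ` cb n lam \<subseteq> Lam_refining n r lam" using image_part[OF assms] by auto
    show "Lam_refining n r lam \<subseteq> ro n ` cb n lam" using surj_part[OF assms] by blast
  qed
qed

end
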